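(* Let $c$ be a parameter and let $$\Psi(x,\hbar):=\sum_{j\ge0}s_{(j)}(\tilde{\mathbf t}/\hbar)\,e^{\frac\hbar2j(j-1)}x^j\quad\text{with }\tilde t_k=c^{k-1}\ (k\ge1).$$ Then, with $\hat x=x\cdot$, $\hat y=\hbar x\frac{\partial}{\partial x}$, $$\Big(\frac{\hat xe^{\hat y}}{(1-c\,\hat xe^{\hat y})^2}-\hat y\Big)\Psi=0\quad\text{and}\quad\Big(1-\big(e^{-\hat y}\hat x^{-1}-2c+c^2\hat xe^{\hat y}\big)\hat y\Big)\Psi(x,\hbar)=0.$$ For $c=0$ this reduces to $(e^{-\hat y}\hat x^{-1}\hat y-1)\Psi=0$ for the wave function of single Hurwitz numbers.
   Context: $s_{(j)}$ is defined by $\exp(\sum_{m\ge1}t_mx^m)=\sum_{j\ge0}s_{(j)}(\mathbf t)x^j$ and $\tilde{\mathbf t}/\hbar=(\tilde t_1/\hbar,\tilde t_2/\hbar,\dots)$. The operator $(1-c\hat xe^{\hat y})^{-2}$ is expanded as a power series in $c\hat xe^{\hat y}$; $e^{\pm\hat y}$ acts on $x^m$ by multiplication by $e^{\pm\hbar m}$; all series are formal in $x,\hbar,c$. *)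

theory Defs
  imports Complex_Main "HOL-Computational_Algebra.Formal_Power_Series"
begin

definition schur_h :: "(nat \<Rightarrow> complex) \<Rightarrow> nat \<Rightarrow> complex" where
  "schur_h t j = fps_nth (fps_compose (fps_exp 1) (Abs_fps (\<lambda>m. if m = 0 then 0 else t m))) j"

definition Psi :: "complex \<Rightarrow> complex \<Rightarrow> complex fps" where
  "Psi c h = Abs_fps (\<lambda>j. schur_h (\<lambda>k. c ^ (k - 1) / h) j
                         * exp (h / 2 * of_nat j * (of_nat j - 1)))"

text \<open>Operators: xhat = multiplication by x, yhat = hbar x d/dx,
  e^{yhat} and e^{-yhat} act on x^m by exp(+-hbar m), xhat^{-1} = division by x
  (only applied to series with vanishing constant term).\<close>
definition xop :: "complex fps \<Rightarrow> complex fps" where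
  "xop f = fps_X * f"

definition xinvop :: "complex fps \<Rightarrow> complex fps" where
  "xinvop f = fps_shift 1 f"

definition yop :: "complex \<Rightarrow> complex fps \<Rightarrow> complex fps" where
  "yop h f = Abs_fps (\<lambda>m. h * of_nat m * fps_nth f m)"

definition eyop :: "complex \<Rightarrow> complex fps \<Rightarrow> complex fps" where
  "eyop h f = Abs_fps (\<lambda>m. exp (h * of_nat m) * fps_nth f m)"

definition emyop :: "complex \<Rightarrow> complex fps \<Rightarrow> complex fps" where
  "emyop h f = Abs_fps (\<lambda>m. exp (- h * of_nat m) * fps_nth f m)"

definition Aop :: "complex \<Rightarrow> complex fps \<Rightarrow> complex fps" where
  "Aop h f = xop (eyop h f)"

text \<open>(1 - c A)^{-2} = sum_{n>=0} (n+1) (c A)^n; A raises x-degree by one,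
  so the coefficient of x^N is a finite sum.\<close>
definition invsq_op :: "complex \<Rightarrow> complex \<Rightarrow> complex fps \<Rightarrow> complex fps" where
  "invsq_op c h f = Abs_fps (\<lambda>N. \<Sum>n\<le>N. of_nat (n + 1) * c ^ n * fps_nth (((Aop h) ^^ n) f) N)"

end

theory Submission
  imports Defs
begin

unbundle fps_syntax

definition sS :: "complex \<Rightarrow> complex \<Rightarrow> nat \<Rightarrow> complex" where
  "sS c h j = schur_h (\<lambda>k. c ^ (k - 1) / h) j"

definition qq :: "complex \<Rightarrow> nat \<Rightarrow> complex" where
  "qq h j = exp (h / 2 * of_nat j * (of_nat j - 1))"

lemma Psi_nth: "Psi c h $ j = sS c h j * qq h j"
  by (simp add: Psi_def sS_def qq_def)

lemma qq_Suc: "qq h (Suc j) = exp (h * of_nat j) * qq h j"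
proof -
  have eq: "h / 2 * of_nat (Suc j) * (of_nat (Suc j) - 1) = h * of_nat j + h / 2 * of_nat j * (of_nat j - 1)"
    by (simp add: field_simps)
  show ?thesis by (simp only: qq_def eq exp_add)
qed

definition UU :: "complex \<Rightarrow> complex \<Rightarrow> complex fps" where
  "UU c h = Abs_fps (\<lambda>m. if m = 0 then 0 else (c ^ (m - 1) / h))"

definition SS :: "complex \<Rightarrow> complex \<Rightarrow> complex fps" where
  "SS c h = fps_compose (fps_exp 1) (UU c h)"

lemma SS_nth: "SS c h $ j = sS c h j"
  unfolding SS_def sS_def schur_h_def UU_def by (rule refl)

definition GG :: "complex \<Rightarrow> complex fps" where
  "GG c = Abs_fps (\<lambda>n. of_nat (n + 1) * c ^ n)"

lemma deriv_SS:
  assumes "h \<noteq> 0"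
  shows "fps_const h * fps_deriv (SS c h) = GG c * SS c h"
proof -
  have d: "fps_deriv (SS c h) = SS c h * fps_deriv (UU c h)"
    unfolding SS_def by (simp add: fps_compose_deriv UU_def)
  have "fps_const h * fps_deriv (UU c h) = GG c"
    using assms by (intro fps_ext) (simp add: UU_def GG_def fps_deriv_def)
  then show ?thesis using d by (metis mult.commute mult.left_commute)
qed

lemma eq1_coeff:
  assumes "h \<noteq> 0"
  shows "h * of_nat (Suc j) * sS c h (Suc j) = (\<Sum>n\<le>j. of_nat (n + 1) * c ^ n * sS c h (j - n))"
proof -
  have "(fps_const h * fps_deriv (SS c h)) $ j = (GG c * SS c h) $ j"
    using deriv_SS[OF assms] by simp
  moreover have "(fps_const h * fps_deriv (SS c h)) $ j = h * of_nat (Suc j) * sS c h (Suc j)"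
    by (simp add: SS_nth)
  moreover have "(GG c * SS c h) $ j = (\<Sum>n\<le>j. of_nat (n + 1) * c ^ n * sS c h (j - n))"
    unfolding fps_mult_nth atMost_atLeast0 by (simp add: SS_nth GG_def)
  ultimately show ?thesis by simp
qed

lemma GG_inv: "GG c - fps_const (2*c) * (fps_X * GG c) + fps_const (c^2) * (fps_X * (fps_X * GG c)) = 1"
proof (rule fps_ext)
  fix n
  show "(GG c - fps_const (2*c) * (fps_X * GG c) + fps_const (c^2) * (fps_X * (fps_X * GG c))) $ n = 1 $ n"
  proof (cases n)
    case 0 then show ?thesis by (simp add: GG_def)
  next
    case (Suc m)
    show ?thesis
    proof (cases m)
      case 0 then show ?thesis using Suc by (simp add: GG_def)
    next
      case (Suc k)
      have "of_nat (k + 3) * c ^ (k+2) - 2 * c * (of_nat (k + 2) * c ^ (k+1)) + c^2 * (of_nat (k+1) * c ^ k) = (0::complex)"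
        by (simp add: algebra_simps power2_eq_square)
      then show ?thesis using Suc \<open>n = Suc m\<close> by (simp add: GG_def eval_nat_numeral)
    qed
  qed
qed

lemma eq2_coeff:
  assumes "h \<noteq> 0"
  shows "sS c h j = h * of_nat (Suc j) * sS c h (Suc j) - 2 * c * (h * of_nat j * sS c h j)
          + c^2 * (if j = 0 then 0 else h * of_nat (j - 1) * sS c h (j - 1))"
proof -
  define D where "D = fps_const h * fps_deriv (SS c h)"
  have "SS c h = (GG c - fps_const (2*c) * (fps_X * GG c) + fps_const (c^2) * (fps_X * (fps_X * GG c))) * SS c h"
    by (simp add: GG_inv)
  also have "\<dots> = D - fps_const (2*c) * (fps_X * D) + fps_const (c^2) * (fps_X * (fps_X * D))"
    unfolding D_def deriv_SS[OF assms] by (simp add: algebra_simps)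
  finally have "SS c h $ j = (D - fps_const (2*c) * (fps_X * D) + fps_const (c^2) * (fps_X * (fps_X * D))) $ j"
    by simp
  then show ?thesis
    by (cases j) (auto simp: D_def SS_nth algebra_simps)
qed

lemma Aop_nth: "Aop h f $ N = (if N = 0 then 0 else exp (h * of_nat (N - 1)) * f $ (N - 1))"
  by (simp add: Aop_def xop_def eyop_def)

lemma Apow_Psi: "((Aop h) ^^ n) (Psi c h) $ N = (if n \<le> N then sS c h (N - n) * qq h N else 0)"
proof (induction n arbitrary: N)
  case 0 then show ?case by (simp add: Psi_nth)
next
  case (Suc n)
  show ?case
  proof (cases N)
    case 0 then show ?thesis by (simp add: Aop_nth)
  next
    case (Suc M)
    then show ?thesis using Suc.IH by (simp add: Aop_nth qq_Suc)
  qed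
qed

theorem mainTheorem12:
  fixes c h :: complex
  assumes "h \<noteq> 0"
  shows "Aop h (invsq_op c h (Psi c h)) - yop h (Psi c h) = 0
     \<and> Psi c h - (emyop h (xinvop (yop h (Psi c h))) - fps_const (2 * c) * yop h (Psi c h)
                   + fps_const (c\<^sup>2) * Aop h (yop h (Psi c h))) = 0
     \<and> emyop h (xinvop (yop h (Psi 0 h))) - Psi 0 h = 0"
proof -
  have E1: "Aop h (invsq_op c h (Psi c h)) = yop h (Psi c h)"
  proof (rule fps_ext)
    fix j
    show "Aop h (invsq_op c h (Psi c h)) $ j = yop h (Psi c h) $ j"
    proof (cases j)
      case 0 then show ?thesis by (simp add: Aop_nth yop_def)
    next
      case (Suc M)
      have "(\<Sum>n\<le>M. of_nat (n + 1) * c ^ n * (((Aop h) ^^ n) (Psi c h) $ M))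
            = (\<Sum>n\<le>M. of_nat (n + 1) * c ^ n * sS c h (M - n)) * qq h M"
        by (simp add: Apow_Psi sum_distrib_right mult.assoc)
      then show ?thesis using Suc eq1_coeff[OF assms, of M c]
        by (simp add: Aop_nth yop_def invsq_op_def Psi_nth qq_Suc mult.assoc)
    qed
  qed
  have E2: "\<And>c. Psi c h = emyop h (xinvop (yop h (Psi c h))) - fps_const (2 * c) * yop h (Psi c h)
                   + fps_const (c\<^sup>2) * Aop h (yop h (Psi c h))"
  proof (rule fps_ext)
    fix c j
    have e: "exp (- h * of_nat j) * qq h (Suc j) = qq h j"
      by (simp add: qq_Suc exp_minus field_simps)
    have e2: "j \<noteq> 0 \<Longrightarrow> exp (h * of_nat (j - 1)) * qq h (j - 1) = qq h j"
      by (cases j) (simp_all add: qq_Suc)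
    have "Psi c h $ j = sS c h j * qq h j" by (simp add: Psi_nth)
    also have "\<dots> = (h * of_nat (Suc j) * sS c h (Suc j) - 2 * c * (h * of_nat j * sS c h j)
          + c^2 * (if j = 0 then 0 else h * of_nat (j - 1) * sS c h (j - 1))) * qq h j"
      using eq2_coeff[OF assms, of c j] by simp
    also have "\<dots> = exp (- h * of_nat j) * (h * of_nat (Suc j) * (sS c h (Suc j) * qq h (Suc j)))
        - 2 * c * (h * of_nat j * (sS c h j * qq h j))
        + c^2 * (if j = 0 then 0 else exp (h * of_nat (j - 1)) * (h * of_nat (j - 1) * (sS c h (j - 1) * qq h (j - 1))))"
    proof -
      have a: "exp (- h * of_nat j) * (h * of_nat (Suc j) * (sS c h (Suc j) * qq h (Suc j)))
          = h * of_nat (Suc j) * sS c h (Suc j) * qq h j"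
        using e by (simp add: mult_ac)
      have b: "(if j = 0 then 0 else exp (h * of_nat (j - 1)) * (h * of_nat (j - 1) * (sS c h (j - 1) * qq h (j - 1))))
          = (if j = 0 then 0 else h * of_nat (j - 1) * sS c h (j - 1)) * qq h j"
        using e2 by (auto simp: mult_ac)
      show ?thesis unfolding a b by (simp add: algebra_simps)
    qed
    also have "\<dots> = (emyop h (xinvop (yop h (Psi c h))) - fps_const (2 * c) * yop h (Psi c h)
                   + fps_const (c\<^sup>2) * Aop h (yop h (Psi c h))) $ j"
      by (simp add: emyop_def xinvop_def yop_def Psi_nth Aop_nth del: of_nat_Suc)
    finally show "Psi c h $ j = (emyop h (xinvop (yop h (Psi c h))) - fps_const (2 * c) * yop h (Psi c h)
                   + fps_const (c\<^sup>2) * Aop h (yop h (Psi c h))) $ j" .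
  qed
  have E3: "emyop h (xinvop (yop h (Psi 0 h))) = Psi 0 h"
    using E2[of 0] by simp
  show ?thesis using E1 E2[of c] E3 by simp
qed

end
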